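(* Let $(G,c)$ be a W-state graph, and let $X$ and $X'$ be the vertex sets of the two connected components of the spanning subgraph $G_m=(V(G),E_m(G))$ of monochromatic edges. If $\min(|X|,|X'|)\ge 3$, then $G$ is bicritical.
   Context: Graphs may have parallel edges but no loops. A half-edge $2$-colouring $c$ of $G$ assigns to each pair $(e,w)$ with $w$ an endpoint of edge $e$ a colour in $\{0,1\}$ (0 = blue, 1 = red). An edge $e=uv$ is bichromatic if $c(e,u)\neq c(e,v)$ and monochromatic otherwise; $E_m(G)$ is the set of monochromatic edges; standing convention: monochromatic edges are blue at both ends. A graph is matching-covered if every edge lies in some perfect matching. A W-state graph is a half-edge $2$-coloured matching-covered graph $(G,c)$ in which every perfect matching contains exactly one bichromatic edge, and every vertex $v$ is incident with an edge $e$ with $c(e,v)=1$. For any W-state graph, $G_m$ has exactly two connected components. A graph $G$ with $|V(G)|\ge 4$ is bicritical if $G-\{u,v\}$ has a perfect matching for all distinct $u,v\in V(G)$. *)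

theory Defs
  imports Main
begin

text \<open>A finite multigraph without loops: vertex set V, edge set E (edges are abstract
  objects of type 'e, so parallel edges are allowed), and an endpoint map ends
  assigning to each edge a set of exactly two distinct vertices of V.\<close>
definition multigraph :: "'v set \<Rightarrow> 'e set \<Rightarrow> ('e \<Rightarrow> 'v set) \<Rightarrow> bool" where
  "multigraph V E ends \<longleftrightarrow> finite V \<and> finite E \<and>
     (\<forall>e\<in>E. ends e \<subseteq> V \<and> card (ends e) = 2)"

definition perfect_matching :: "'v set \<Rightarrow> 'e set \<Rightarrow> ('e \<Rightarrow> 'v set) \<Rightarrow> 'e set \<Rightarrow> bool" where
  "perfect_matching V E ends M \<longleftrightarrow> M \<subseteq> E \<and>
     (\<forall>v\<in>V. \<exists>!e. e \<in> M \<and> v \<in> ends e)"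

definition matching_covered :: "'v set \<Rightarrow> 'e set \<Rightarrow> ('e \<Rightarrow> 'v set) \<Rightarrow> bool" where
  "matching_covered V E ends \<longleftrightarrow>
     (\<forall>e\<in>E. \<exists>M. perfect_matching V E ends M \<and> e \<in> M)"

text \<open>Half-edge 2-colouring: c e w \<in> {0,1} for every edge e and endpoint w of e
  (0 = blue, 1 = red).\<close>
definition half_edge_colouring :: "'e set \<Rightarrow> ('e \<Rightarrow> 'v set) \<Rightarrow> ('e \<Rightarrow> 'v \<Rightarrow> nat) \<Rightarrow> bool" where
  "half_edge_colouring E ends c \<longleftrightarrow> (\<forall>e\<in>E. \<forall>w\<in>ends e. c e w \<in> {0, 1})"

definition bichromatic :: "('e \<Rightarrow> 'v set) \<Rightarrow> ('e \<Rightarrow> 'v \<Rightarrow> nat) \<Rightarrow> 'e \<Rightarrow> bool" where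
  "bichromatic ends c e \<longleftrightarrow> (\<exists>u\<in>ends e. \<exists>v\<in>ends e. c e u \<noteq> c e v)"

definition mono_edges :: "'e set \<Rightarrow> ('e \<Rightarrow> 'v set) \<Rightarrow> ('e \<Rightarrow> 'v \<Rightarrow> nat) \<Rightarrow> 'e set" where
  "mono_edges E ends c = {e \<in> E. \<not> bichromatic ends c e}"

definition W_state_graph :: "'v set \<Rightarrow> 'e set \<Rightarrow> ('e \<Rightarrow> 'v set) \<Rightarrow> ('e \<Rightarrow> 'v \<Rightarrow> nat) \<Rightarrow> bool" where
  "W_state_graph V E ends c \<longleftrightarrow>
     multigraph V E ends \<and> half_edge_colouring E ends c \<and> matching_covered V E ends \<and>
     (\<forall>M. perfect_matching V E ends M \<longrightarrow> card {e \<in> M. bichromatic ends c e} = 1) \<and>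
     (\<forall>v\<in>V. \<exists>e\<in>E. v \<in> ends e \<and> c e v = 1)"

definition adj_rel :: "'v set \<Rightarrow> 'e set \<Rightarrow> ('e \<Rightarrow> 'v set) \<Rightarrow> ('v \<times> 'v) set" where
  "adj_rel V F ends = {(u, v). u \<in> V \<and> v \<in> V \<and> (\<exists>e\<in>F. ends e = {u, v})}"

definition components :: "'v set \<Rightarrow> 'e set \<Rightarrow> ('e \<Rightarrow> 'v set) \<Rightarrow> 'v set set" where
  "components V F ends = (\<lambda>v. {w. (v, w) \<in> (adj_rel V F ends)\<^sup>*}) ` V"

definition bicritical :: "'v set \<Rightarrow> 'e set \<Rightarrow> ('e \<Rightarrow> 'v set) \<Rightarrow> bool" where
  "bicritical V E ends \<longleftrightarrow> card V \<ge> 4 \<and>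
     (\<forall>u\<in>V. \<forall>v\<in>V. u \<noteq> v \<longrightarrow>
        (\<exists>M. perfect_matching (V - {u, v}) {e \<in> E. ends e \<inter> {u, v} = {}} ends M))"

end

theory Submission
  imports Defs
begin

definition pmon :: "'v set \<Rightarrow> 'e set \<Rightarrow> ('e \<Rightarrow> 'v set) \<Rightarrow> 'e set \<Rightarrow> bool" where
  "pmon S F ends N \<longleftrightarrow> N \<subseteq> F \<and> (\<forall>g\<in>N. ends g \<subseteq> S) \<and> (\<forall>z\<in>S. \<exists>!g. g \<in> N \<and> z \<in> ends g)"

lemma pmon_pm: "pmon S F ends N \<Longrightarrow> perfect_matching S F ends N"
  unfolding pmon_def perfect_matching_def by blast

lemma pmon_mono: "pmon S F ends N \<Longrightarrow> N \<subseteq> F' \<Longrightarrow> pmon S F' ends N"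
  unfolding pmon_def by blast

lemma pmon_un:
  assumes "pmon S1 F ends N1" "pmon S2 F ends N2" "S1 \<inter> S2 = {}"
  shows "pmon (S1 \<union> S2) F ends (N1 \<union> N2)"
  unfolding pmon_def
proof (intro conjI ballI)
  show "N1 \<union> N2 \<subseteq> F" using assms unfolding pmon_def by blast
next
  fix g assume "g \<in> N1 \<union> N2" then show "ends g \<subseteq> S1 \<union> S2" using assms unfolding pmon_def by blast
next
  fix z assume z: "z \<in> S1 \<union> S2"
  show "\<exists>!g. g \<in> N1 \<union> N2 \<and> z \<in> ends g"
  proof (cases "z \<in> S1")
    case True
    then obtain g where g: "g \<in> N1" "z \<in> ends g" "\<And>g'. g' \<in> N1 \<Longrightarrow> z \<in> ends g' \<Longrightarrow> g' = g"
      using assms(1) unfolding pmon_def by metis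
    have "\<And>g'. g' \<in> N2 \<Longrightarrow> z \<notin> ends g'" using assms(2,3) True unfolding pmon_def by blast
    then show ?thesis using g by blast
  next
    case False
    then have z2: "z \<in> S2" using z by blast
    then obtain g where g: "g \<in> N2" "z \<in> ends g" "\<And>g'. g' \<in> N2 \<Longrightarrow> z \<in> ends g' \<Longrightarrow> g' = g"
      using assms(2) unfolding pmon_def by metis
    have "\<And>g'. g' \<in> N1 \<Longrightarrow> z \<notin> ends g'" using assms(1,3) z2 unfolding pmon_def by blast
    then show ?thesis using g by blast
  qed
qed

lemma pmon_remove:
  assumes "pmon S F ends N" "g \<in> N"
  shows "pmon (S - ends g) F ends (N - {g})"
  unfolding pmon_def
proof (intro conjI ballI)
  show "N - {g} \<subseteq> F" using assms unfolding pmon_def by blast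
next
  fix g' assume g': "g' \<in> N - {g}"
  show "ends g' \<subseteq> S - ends g"
  proof
    fix t assume t: "t \<in> ends g'"
    have tS: "t \<in> S" using assms(1) g' t unfolding pmon_def by blast
    have "t \<notin> ends g"
    proof
      assume "t \<in> ends g"
      then have "g = g'" using assms tS t g' unfolding pmon_def by blast
      then show False using g' by blast
    qed
    then show "t \<in> S - ends g" using tS by blast
  qed
next
  fix z assume "z \<in> S - ends g"
  then show "\<exists>!g'. g' \<in> N - {g} \<and> z \<in> ends g'" using assms(1) unfolding pmon_def by blast
qed

lemma pmon_single: "f \<in> F \<Longrightarrow> pmon (ends f) F ends {f}"
  unfolding pmon_def by blast

lemma pmon_even:
  assumes "pmon S F ends N" "\<forall>g\<in>F. card (ends g) = 2" "finite S"
  shows "even (card S)"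
proof -
  let ?C = "ends ` N"
  have U: "\<Union>?C = S" using assms(1) unfolding pmon_def by blast
  have fin: "finite ?C" using U assms(3) by (metis finite_UnionD)
  have c2: "\<forall>c\<in>?C. card c = 2" using assms(1,2) unfolding pmon_def by blast
  have disj: "\<forall>c1\<in>?C. \<forall>c2\<in>?C. c1 \<noteq> c2 \<longrightarrow> c1 \<inter> c2 = {}"
  proof (intro ballI impI)
    fix c1 c2 assume c: "c1 \<in> ?C" "c2 \<in> ?C" "c1 \<noteq> c2"
    then obtain g1 g2 where g: "g1 \<in> N" "g2 \<in> N" "c1 = ends g1" "c2 = ends g2" by blast
    show "c1 \<inter> c2 = {}"
    proof (rule ccontr)
      assume "c1 \<inter> c2 \<noteq> {}"
      then obtain z where z: "z \<in> ends g1" "z \<in> ends g2" using g by blast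
      then have "z \<in> S" using assms(1) g unfolding pmon_def by blast
      then have "g1 = g2" using assms(1) g z unfolding pmon_def by blast
      then show False using c g by blast
    qed
  qed
  have "2 * card ?C = card (\<Union>?C)"
    using card_partition[of ?C 2] fin c2 disj U assms(3) by simp
  then show ?thesis using U by (metis dvd_triv_left)
qed

definition closedset :: "'e set \<Rightarrow> ('e \<Rightarrow> 'v set) \<Rightarrow> 'v set \<Rightarrow> bool" where
  "closedset F ends A \<longleftrightarrow> (\<forall>e\<in>F. \<forall>p\<in>ends e. \<forall>q\<in>ends e. p \<in> A \<longrightarrow> q \<in> A)"

lemma two_eq_gen: "card S = 2 \<Longrightarrow> p \<in> S \<Longrightarrow> q \<in> S \<Longrightarrow> p \<noteq> q \<Longrightarrow> S = {p, q}"
  by (smt (verit, ccfv_threshold) card_2_iff doubleton_eq_iff insertE singletonD)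

locale wsg =
  fixes V :: "'v set" and E :: "'e set" and ends :: "'e \<Rightarrow> 'v set" and c :: "'e \<Rightarrow> 'v \<Rightarrow> nat"
  assumes W: "W_state_graph V E ends c"
    and mono0: "\<forall>e\<in>mono_edges E ends c. \<forall>w\<in>ends e. c e w = 0"
begin

abbreviation "Em \<equiv> mono_edges E ends c"

lemma finV: "finite V" using W unfolding W_state_graph_def multigraph_def by blast

lemma ends_sub: "e \<in> E \<Longrightarrow> ends e \<subseteq> V" using W unfolding W_state_graph_def multigraph_def by blast

lemma ends_card: "e \<in> E \<Longrightarrow> card (ends e) = 2" using W unfolding W_state_graph_def multigraph_def by blast

lemma Em_sub: "Em \<subseteq> E" unfolding mono_edges_def by blast

lemma one_bi:
  assumes "perfect_matching V E ends M"
  shows "\<exists>b\<in>M. bichromatic ends c b \<and> (\<forall>g\<in>M. g \<noteq> b \<longrightarrow> g \<in> Em)"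
proof -
  have "card {e \<in> M. bichromatic ends c e} = 1" using W assms unfolding W_state_graph_def by blast
  then obtain b where b: "{e \<in> M. bichromatic ends c e} = {b}" using card_1_singletonE by blast
  have ME: "M \<subseteq> E" using assms unfolding perfect_matching_def by blast
  show ?thesis
    apply (rule bexI[of _ b])
    using b ME unfolding mono_edges_def by blast+
qed

lemma red: "v \<in> V \<Longrightarrow> \<exists>f\<in>E. v \<in> ends f \<and> bichromatic ends c f"
proof -
  assume "v \<in> V"
  then obtain f where f: "f \<in> E" "v \<in> ends f" "c f v = 1" using W unfolding W_state_graph_def by blast
  have "f \<notin> Em" using mono0 f by fastforce
  then show ?thesis using f unfolding mono_edges_def by blast
qed

lemma pm_cover: "f \<in> E \<Longrightarrow> \<exists>M. perfect_matching V E ends M \<and> f \<in> M"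
  using W unfolding W_state_graph_def matching_covered_def by blast

lemma restrict:
  assumes M: "perfect_matching V E ends M" and b: "b \<in> M" and oth: "\<forall>g\<in>M. g \<noteq> b \<longrightarrow> g \<in> Em"
    and cl: "closedset Em ends A" and AV: "A \<subseteq> V"
  shows "\<exists>N. pmon (A - ends b) Em ends N"
proof -
  define N where "N = {g\<in>M. g \<noteq> b \<and> ends g \<subseteq> A - ends b}"
  have ME: "M \<subseteq> E" using M unfolding perfect_matching_def by blast
  have "pmon (A - ends b) Em ends N"
    unfolding pmon_def
  proof (intro conjI ballI)
    show "N \<subseteq> Em" using oth unfolding N_def by blast
  next
    fix g assume "g \<in> N" then show "ends g \<subseteq> A - ends b" unfolding N_def by blast
  next
    fix z assume z: "z \<in> A - ends b"
    then have zV: "z \<in> V" using AV by blast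
    then obtain g where g: "g \<in> M" "z \<in> ends g" "\<And>g'. g' \<in> M \<Longrightarrow> z \<in> ends g' \<Longrightarrow> g' = g"
      using M unfolding perfect_matching_def by metis
    have gb: "g \<noteq> b" using g z by blast
    have gEm: "g \<in> Em" using oth g gb by blast
    have gA: "ends g \<subseteq> A" using cl gEm g z unfolding closedset_def by blast
    have gd: "ends g \<inter> ends b = {}"
    proof (rule ccontr)
      assume "ends g \<inter> ends b \<noteq> {}"
      then obtain t where t: "t \<in> ends g" "t \<in> ends b" by blast
      then have "t \<in> V" using gA AV by blast
      then have "g = b" using M g b t unfolding perfect_matching_def by blast
      then show False using gb by blast
    qed
    have "g \<in> N" using g gb gA gd unfolding N_def by blast
    then show "\<exists>!g. g \<in> N \<and> z \<in> ends g" using g unfolding N_def by blast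
  qed
  then show ?thesis by blast
qed

lemma two_eq: "card S = 2 \<Longrightarrow> p \<in> S \<Longrightarrow> q \<in> S \<Longrightarrow> p \<noteq> q \<Longrightarrow> S = {p, q}"
  by (smt (verit, ccfv_threshold) card_2_iff doubleton_eq_iff insertE singletonD)

lemma only_bi:
  assumes M: "perfect_matching V E ends M" and e: "e \<in> M" "bichromatic ends c e"
  shows "\<forall>g\<in>M. g \<noteq> e \<longrightarrow> g \<in> Em"
proof -
  obtain b where b: "b \<in> M" "bichromatic ends c b" "\<forall>g\<in>M. g \<noteq> b \<longrightarrow> g \<in> Em"
    using one_bi[OF M] by blast
  have "b = e"
  proof (rule ccontr)
    assume "b \<noteq> e"
    then have "e \<in> Em" using b(3) e(1) by metis
    then show False using e(2) unfolding mono_edges_def by blast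
  qed
  then show ?thesis using b by blast
qed

lemma pmon_E: "pmon S Em ends N \<Longrightarrow> pmon S E ends N"
proof -
  assume a: "pmon S Em ends N"
  then have "N \<subseteq> E" using Em_sub unfolding pmon_def by blast
  then show ?thesis using pmon_mono[OF a] by blast
qed

lemma cross:
  assumes part: "A \<union> B = V" "A \<inter> B = {}" and clA: "closedset Em ends A" and clB: "closedset Em ends B"
    and Bne: "B \<noteq> {}" and e: "e \<in> E" "bichromatic ends c e" "ends e \<subseteq> A"
  shows False
proof -
  obtain M where M: "perfect_matching V E ends M" "e \<in> M" using pm_cover e by blast
  have oth: "\<forall>g\<in>M. g \<noteq> e \<longrightarrow> g \<in> Em" using only_bi M e by blast
  have BV: "B \<subseteq> V" "A \<subseteq> V" using part by blast+
  have finB: "finite B" using BV finV finite_subset by blast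
  obtain NB where NB0: "pmon (B - ends e) Em ends NB" using restrict[OF M oth clB BV(1)] by blast
  have "B - ends e = B" using e part by blast
  then have NB: "pmon B Em ends NB" using NB0 by simp
  have c2: "\<forall>g\<in>Em. card (ends g) = 2" using ends_card Em_sub by blast
  have evB: "even (card B)" using pmon_even[OF NB c2 finB] .
  obtain y where y: "y \<in> B" using Bne by blast
  obtain f where f: "f \<in> E" "y \<in> ends f" "bichromatic ends c f" using red y BV by blast
  obtain M2 where M2: "perfect_matching V E ends M2" "f \<in> M2" using pm_cover f by blast
  have oth2: "\<forall>g\<in>M2. g \<noteq> f \<longrightarrow> g \<in> Em" using only_bi M2 f by blast
  show False
  proof (cases "ends f \<subseteq> B")
    case True
    obtain NA where NA0: "pmon (A - ends f) Em ends NA" using restrict[OF M2 oth2 clA BV(2)] by blast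
    have "A - ends f = A" using True part by blast
    then have NA: "pmon A Em ends NA" using NA0 by simp
    have "pmon V Em ends (NA \<union> NB)" using pmon_un[OF NA NB part(2)] part(1) by simp
    then have P: "perfect_matching V E ends (NA \<union> NB)" using pmon_E pmon_pm by blast
    have "NA \<union> NB \<subseteq> Em" using NA NB unfolding pmon_def by blast
    then show False using one_bi[OF P] unfolding mono_edges_def by blast
  next
    case False
    then obtain z where z: "z \<in> ends f" "z \<notin> B" by blast
    have yz: "y \<noteq> z" using y z by blast
    have fe: "ends f = {y, z}" using two_eq[OF ends_card[OF f(1)] f(2) z(1) yz] .
    obtain N2 where N20: "pmon (B - ends f) Em ends N2" using restrict[OF M2 oth2 clB BV(1)] by blast
    have "B - ends f = B - {y}" using fe z by blast
    then have N2: "pmon (B - {y}) Em ends N2" using N20 by simp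
    have "even (card (B - {y}))" using pmon_even[OF N2 c2] finB by blast
    moreover have "card (B - {y}) = card B - 1" using y finB by simp
    moreover have "card B \<ge> 1" using y finB card_0_eq by fastforce
    ultimately show False using evB by presburger
  qed
qed

lemma key:
  assumes part: "A \<union> B = V" "A \<inter> B = {}" and clA: "closedset Em ends A" and clB: "closedset Em ends B"
    and Ane: "A \<noteq> {}" and Bne: "B \<noteq> {}" and x: "x \<in> A"
  shows "\<exists>f y. f \<in> E \<and> ends f = {x, y} \<and> y \<in> B \<and> (\<exists>N. pmon (A - {x}) Em ends N) \<and> (\<exists>N. pmon (B - {y}) Em ends N)"
proof -
  have BV: "B \<subseteq> V" "A \<subseteq> V" using part by blast+
  obtain f where f: "f \<in> E" "x \<in> ends f" "bichromatic ends c f" using red x BV by blast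
  obtain M where M: "perfect_matching V E ends M" "f \<in> M" using pm_cover f by blast
  have oth: "\<forall>g\<in>M. g \<noteq> f \<longrightarrow> g \<in> Em" using only_bi M f by blast
  have nA: "\<not> ends f \<subseteq> A" using cross[OF part clA clB Bne f(1) f(3)] by blast
  then obtain y where y: "y \<in> ends f" "y \<notin> A" by blast
  have yB: "y \<in> B" using y ends_sub[OF f(1)] part by blast
  have xy: "x \<noteq> y" using x y by blast
  have fe: "ends f = {x, y}" using two_eq[OF ends_card[OF f(1)] f(2) y(1) xy] .
  obtain N1 where N1: "pmon (A - ends f) Em ends N1" using restrict[OF M(1) M(2) oth clA BV(2)] by blast
  obtain N2 where N2: "pmon (B - ends f) Em ends N2" using restrict[OF M(1) M(2) oth clB BV(1)] by blast
  have yA: "y \<notin> A" using y by blast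
  have xB: "x \<notin> B" using x part(2) by blast
  have e1: "A - ends f = A - {x}" using fe yA by auto
  have e2: "B - ends f = B - {y}" using fe xB by auto
  have N1': "pmon (A - {x}) Em ends N1" using N1 e1 by simp
  have N2': "pmon (B - {y}) Em ends N2" using N2 e2 by simp
  show ?thesis using N1' N2' f(1) fe yB by blast
qed

lemma pmon_target:
  assumes "pmon S E ends N" "S \<inter> T = {}"
  shows "pmon S {e \<in> E. ends e \<inter> T = {}} ends N"
  using assms unfolding pmon_def by blast

lemma case_diff:
  assumes part: "A \<union> B = V" "A \<inter> B = {}" and clA: "closedset Em ends A" and clB: "closedset Em ends B"
    and Ane: "A \<noteq> {}" and Bne: "B \<noteq> {}" and u: "u \<in> A" and v: "v \<in> B"
  shows "\<exists>M. perfect_matching (V - {u, v}) {e \<in> E. ends e \<inter> {u, v} = {}} ends M"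
proof -
  obtain N1 where N1: "pmon (A - {u}) Em ends N1" using key[OF part clA clB Ane Bne u] by blast
  have part': "B \<union> A = V" "B \<inter> A = {}" using part by blast+
  obtain N2 where N2: "pmon (B - {v}) Em ends N2" using key[OF part' clB clA Bne Ane v] by blast
  have d: "(A - {u}) \<inter> (B - {v}) = {}" using part(2) by blast
  have "pmon ((A - {u}) \<union> (B - {v})) Em ends (N1 \<union> N2)" using pmon_un[OF N1 N2 d] .
  moreover have "(A - {u}) \<union> (B - {v}) = V - {u, v}" using part u v by blast
  ultimately have "pmon (V - {u, v}) E ends (N1 \<union> N2)" using pmon_E by simp
  then have "pmon (V - {u, v}) {e \<in> E. ends e \<inter> {u, v} = {}} ends (N1 \<union> N2)"
    using pmon_target by blast
  then show ?thesis using pmon_pm by blast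
qed

lemma case_same:
  assumes part: "A \<union> B = V" "A \<inter> B = {}" and clA: "closedset Em ends A" and clB: "closedset Em ends B"
    and Ane: "A \<noteq> {}" and Bne: "B \<noteq> {}" and u: "u \<in> A" and v: "v \<in> A" and uv: "u \<noteq> v"
  shows "\<exists>M. perfect_matching (V - {u, v}) {e \<in> E. ends e \<inter> {u, v} = {}} ends M"
proof -
  obtain N where N: "pmon (A - {u}) Em ends N" using key[OF part clA clB Ane Bne u] by blast
  have vA: "v \<in> A - {u}" using v uv by blast
  obtain g where g: "g \<in> N" "v \<in> ends g" using N vA unfolding pmon_def by metis
  have gEm: "g \<in> Em" and gA: "ends g \<subseteq> A - {u}" using N g unfolding pmon_def by blast+
  have "card (ends g) = 2" using gEm Em_sub ends_card by blast
  then obtain a b where ab: "ends g = {a, b}" "a \<noteq> b" by (meson card_2_iff)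
  define w where "w = (if a = v then b else a)"
  have w: "w \<in> ends g" "w \<noteq> v" using ab g(2) unfolding w_def by auto
  have ge: "ends g = {v, w}" using two_eq[OF \<open>card (ends g) = 2\<close> g(2) w(1)] w(2) by blast
  have wA: "w \<in> A" "w \<noteq> u" using gA w by blast+
  obtain f y N' where f: "f \<in> E" "ends f = {w, y}" "y \<in> B" and N': "pmon (B - {y}) Em ends N'"
    using key[OF part clA clB Ane Bne wA(1)] by blast
  have N1: "pmon (A - {u} - {v, w}) E ends (N - {g})"
    using pmon_E[OF pmon_remove[OF N g(1)]] ge by simp
  have F1: "pmon {w, y} E ends {f}" using pmon_single[OF f(1), of ends] f(2) by simp
  have yA: "y \<notin> A" using part(2) f(3) by blast
  have wB: "w \<notin> B" using part(2) wA(1) by blast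
  have d1: "(A - {u} - {v, w}) \<inter> {w, y} = {}" using yA by blast
  have U1: "pmon ((A - {u} - {v, w}) \<union> {w, y}) E ends ((N - {g}) \<union> {f})"
    using pmon_un[OF N1 F1 d1] .
  have d2: "((A - {u} - {v, w}) \<union> {w, y}) \<inter> (B - {y}) = {}" using part(2) wB by blast
  have U2: "pmon (((A - {u} - {v, w}) \<union> {w, y}) \<union> (B - {y})) E ends (((N - {g}) \<union> {f}) \<union> N')"
    using pmon_un[OF U1 pmon_E[OF N'] d2] .
  have "((A - {u} - {v, w}) \<union> {w, y}) \<union> (B - {y}) = V - {u, v}"
  proof -
    have uB: "u \<notin> B" "v \<notin> B" using part(2) u v by blast+
    show ?thesis using part(1) wA f(3) uB w(2) by auto
  qed
  then have "pmon (V - {u, v}) E ends (((N - {g}) \<union> {f}) \<union> N')" using U2 by simp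
  then have "pmon (V - {u, v}) {e \<in> E. ends e \<inter> {u, v} = {}} ends (((N - {g}) \<union> {f}) \<union> N')"
    using pmon_target by blast
  then show ?thesis using pmon_pm by blast
qed

end


lemma comp_facts:
  assumes F: "\<forall>e\<in>F. ends e \<subseteq> V \<and> card (ends e) = 2" and K: "K \<in> components V F ends"
  shows "K \<subseteq> V \<and> closedset F ends K"
proof -
  let ?R = "adj_rel V F ends"
  obtain x where x: "x \<in> V" "K = {w. (x, w) \<in> ?R\<^sup>*}" using K unfolding components_def by blast
  have sub: "K \<subseteq> V"
  proof
    fix w assume "w \<in> K"
    then have "(x, w) \<in> ?R\<^sup>*" using x by blast
    then show "w \<in> V"
      by (induction rule: rtrancl_induct) (use x in \<open>auto simp: adj_rel_def\<close>)
  qed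
  have cl: "closedset F ends K"
    unfolding closedset_def
  proof (intro ballI impI)
    fix e p q assume e: "e \<in> F" "p \<in> ends e" "q \<in> ends e" "p \<in> K"
    show "q \<in> K"
    proof (cases "p = q")
      case True then show ?thesis using e by simp
    next
      case False
      have "ends e = {p, q}" using two_eq_gen[of "ends e" p q] F e False by blast
      moreover have "p \<in> V" "q \<in> V" using F e by blast+
      ultimately have "(p, q) \<in> ?R" using e(1) unfolding adj_rel_def by blast
      moreover have "(x, p) \<in> ?R\<^sup>*" using e(4) x by blast
      ultimately have "(x, q) \<in> ?R\<^sup>*" by (meson rtrancl_into_rtrancl)
      then show ?thesis using x by blast
    qed
  qed
  show ?thesis using sub cl by blast
qed

lemma comp_disj:
  assumes K1: "K1 \<in> components V F ends" and K2: "K2 \<in> components V F ends" and ne: "K1 \<noteq> K2"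
  shows "K1 \<inter> K2 = {}"
proof (rule ccontr)
  let ?R = "adj_rel V F ends"
  assume "K1 \<inter> K2 \<noteq> {}"
  then obtain w where w: "w \<in> K1" "w \<in> K2" by blast
  obtain x1 where x1: "K1 = {w. (x1, w) \<in> ?R\<^sup>*}" using K1 unfolding components_def by blast
  obtain x2 where x2: "K2 = {w. (x2, w) \<in> ?R\<^sup>*}" using K2 unfolding components_def by blast
  have symR: "sym ?R" unfolding adj_rel_def sym_def by (auto simp: insert_commute)
  then have symS: "sym (?R\<^sup>*)" by (rule sym_rtrancl)
  have a: "(x1, w) \<in> ?R\<^sup>*" "(x2, w) \<in> ?R\<^sup>*" using w x1 x2 by blast+
  have b: "(w, x2) \<in> ?R\<^sup>*" "(w, x1) \<in> ?R\<^sup>*" using a symS unfolding sym_def by blast+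
  have "(x1, x2) \<in> ?R\<^sup>*" using a(1) b(1) by (rule rtrancl_trans)
  then have s1: "K2 \<subseteq> K1" using x1 x2 by (auto intro: rtrancl_trans)
  have "(x2, x1) \<in> ?R\<^sup>*" using a(2) b(2) by (rule rtrancl_trans)
  then have s2: "K1 \<subseteq> K2" using x1 x2 by (auto intro: rtrancl_trans)
  show False using s1 s2 ne by blast
qed

lemma comp_cover:
  assumes "v \<in> V" shows "\<exists>K\<in>components V F ends. v \<in> K"
  using assms unfolding components_def by blast

theorem mainTheorem11:
  fixes V :: "'v set" and E :: "'e set" and ends :: "'e \<Rightarrow> 'v set"
    and c :: "'e \<Rightarrow> 'v \<Rightarrow> nat" and X X' :: "'v set"
  assumes "W_state_graph V E ends c"
    and "\<forall>e\<in>mono_edges E ends c. \<forall>w\<in>ends e. c e w = 0"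
    and "components V (mono_edges E ends c) ends = {X, X'}"
    and "X \<noteq> X'"
    and "min (card X) (card X') \<ge> 3"
  shows "bicritical V E ends"
proof -
  interpret wsg V E ends c using assms(1,2) by unfold_locales
  have F: "\<forall>e\<in>Em. ends e \<subseteq> V \<and> card (ends e) = 2" using Em_sub ends_sub ends_card by blast
  have KX: "X \<in> components V Em ends" "X' \<in> components V Em ends" using assms(3) by blast+
  have fX: "X \<subseteq> V" "closedset Em ends X" using comp_facts[OF F KX(1)] by blast+
  have fX': "X' \<subseteq> V" "closedset Em ends X'" using comp_facts[OF F KX(2)] by blast+
  have dj: "X \<inter> X' = {}" using comp_disj[OF KX assms(4)] .
  have un: "X \<union> X' = V"
  proof
    show "X \<union> X' \<subseteq> V" using fX fX' by blast
    show "V \<subseteq> X \<union> X'" using comp_cover[of _ V Em ends] assms(3) by blast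
  qed
  have cX: "card X \<ge> 3" "card X' \<ge> 3" using assms(5) by auto
  have neX: "X \<noteq> {}" "X' \<noteq> {}" using cX by auto
  have finX: "finite X" "finite X'" using fX(1) fX'(1) finV finite_subset by blast+
  have "card V = card X + card X'" using card_Un_disjoint[OF finX dj] un by simp
  then have c4: "card V \<ge> 4" using cX by simp
  have dj': "X' \<inter> X = {}" and un': "X' \<union> X = V" using dj un by blast+
  show ?thesis
    unfolding bicritical_def
  proof (intro conjI ballI impI c4)
    fix u v assume u: "u \<in> V" and v: "v \<in> V" and uv: "u \<noteq> v"
    show "\<exists>M. perfect_matching (V - {u, v}) {e \<in> E. ends e \<inter> {u, v} = {}} ends M"
    proof (cases "u \<in> X")
      case uX: True
      show ?thesis
      proof (cases "v \<in> X")
        case True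
        then show ?thesis using case_same[OF un dj fX(2) fX'(2) neX uX True uv] by blast
      next
        case False
        then have "v \<in> X'" using v un by blast
        then show ?thesis using case_diff[OF un dj fX(2) fX'(2) neX uX] by blast
      qed
    next
      case uX: False
      then have uX': "u \<in> X'" using u un by blast
      show ?thesis
      proof (cases "v \<in> X'")
        case True
        then show ?thesis using case_same[OF un' dj' fX'(2) fX(2) neX(2) neX(1) uX' True uv] by blast
      next
        case False
        then have "v \<in> X" using v un by blast
        then show ?thesis using case_diff[OF un' dj' fX'(2) fX(2) neX(2) neX(1) uX'] by blast
      qed
    qed
  qed
qed

end
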